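(* Let $v_1\ge\cdots\ge v_n>0$, $1\ge q_1\ge\cdots\ge q_n\ge 0$, and $a=(a_1,\dots,a_n)\in(0,\infty)^n$. For $b\in(0,\infty)^n$ put $\lambda(b)=\frac{\sum_i v_i b_i q_i}{\sum_i v_i b_i}$, let $S=\sum_i v_i a_i$, and let $e_j$ be the $j$-th unit vector. Then $$\sum_{j=1}^n \frac{v_j a_j q_j}{S}\,\lambda(a+e_j)\;+\;\Big(1-\sum_{j=1}^n\frac{v_j a_j q_j}{S}\Big)\lambda(a)\;\ge\;\lambda(a).$$ Equivalently, in the dynamic trial-offer market under the quality ranking with social influence, for every step $t$ the conditional probability (given the history up to step $t$) of a purchase at step $t+1$ is at least the conditional probability of a purchase at step $t$; hence the expected number of purchases per step is non-decreasing in $t$.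
   Context: Dynamic trial-offer market with social influence under the quality ranking: products $1,\dots,n$ with initial appeals $A_i>0$, qualities $1\ge q_1\ge\cdots\ge q_n\ge0$, and product $i$ permanently displayed in position $i$ with visibility $v_i$, where $v_1\ge\cdots\ge v_n>0$. Let $d_{i,t}$ be the number of purchases of product $i$ before step $t$ ($d_{i,1}=0$) and $a_{i,t}=A_i+d_{i,t}$. At step $t$ one participant tries product $i$ with probability $\frac{v_i a_{i,t}}{\sum_j v_j a_{j,t}}$, then purchases it with probability $q_i$ (independently); if purchased, $d_{i,t+1}=d_{i,t}+1$, and all other counts are unchanged. The probability of a purchase at step $t$, given the history, is $\lambda(a_{\cdot,t})$. *)

theory Defs
  imports "HOL-Analysis.Analysis"
begin

definition purchase_prob :: "nat \<Rightarrow> (nat \<Rightarrow> real) \<Rightarrow> (nat \<Rightarrow> real) \<Rightarrow> (nat \<Rightarrow> real) \<Rightarrow> real" where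
  "purchase_prob n v q b = (\<Sum>i=1..n. v i * b i * q i) / (\<Sum>i=1..n. v i * b i)"

definition unit_vec :: "nat \<Rightarrow> nat \<Rightarrow> real" where
  "unit_vec j = (\<lambda>i. if i = j then 1 else 0)"

end

theory Submission
  imports Defs
begin

lemma cheb:
  fixes w c q :: "nat \<Rightarrow> real"
  assumes "finite I" "\<And>i. i \<in> I \<Longrightarrow> w i \<ge> 0"
    "\<And>j k. j \<in> I \<Longrightarrow> k \<in> I \<Longrightarrow> (c j - c k) * (q j - q k) \<ge> 0"
  shows "(\<Sum>i\<in>I. w i * c i) * (\<Sum>i\<in>I. w i * q i) \<le> (\<Sum>i\<in>I. w i) * (\<Sum>i\<in>I. w i * c i * q i)"
proof -
  have "0 \<le> (\<Sum>j\<in>I. \<Sum>k\<in>I. w j * w k * ((c j - c k) * (q j - q k)))"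
    using assms by (intro sum_nonneg) (simp add: assms)
  also have "\<dots> = (\<Sum>j\<in>I. \<Sum>k\<in>I. (w j * c j * q j) * w k) + (\<Sum>j\<in>I. \<Sum>k\<in>I. w j * (w k * c k * q k))
     - (\<Sum>j\<in>I. \<Sum>k\<in>I. (w j * c j) * (w k * q k)) - (\<Sum>j\<in>I. \<Sum>k\<in>I. (w j * q j) * (w k * c k))"
    by (simp add: algebra_simps sum.distrib sum_subtractf)
  also have "\<dots> = 2 * ((\<Sum>i\<in>I. w i) * (\<Sum>i\<in>I. w i * c i * q i) - (\<Sum>i\<in>I. w i * c i) * (\<Sum>i\<in>I. w i * q i))"
    by (simp add: sum_product[symmetric])
  finally show ?thesis by simp
qed

theorem mainTheorem3:
  fixes n :: nat and v q a :: "nat \<Rightarrow> real"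
  assumes "n \<ge> 1"
    and v_mono: "\<And>i j. 1 \<le> i \<Longrightarrow> i \<le> j \<Longrightarrow> j \<le> n \<Longrightarrow> v j \<le> v i"
    and v_pos: "\<And>i. 1 \<le> i \<Longrightarrow> i \<le> n \<Longrightarrow> v i > 0"
    and q_mono: "\<And>i j. 1 \<le> i \<Longrightarrow> i \<le> j \<Longrightarrow> j \<le> n \<Longrightarrow> q j \<le> q i"
    and q_le1: "\<And>i. 1 \<le> i \<Longrightarrow> i \<le> n \<Longrightarrow> q i \<le> 1"
    and q_nonneg: "\<And>i. 1 \<le> i \<Longrightarrow> i \<le> n \<Longrightarrow> q i \<ge> 0"
    and a_pos: "\<And>i. 1 \<le> i \<Longrightarrow> i \<le> n \<Longrightarrow> a i > 0"
  shows "(let S = (\<Sum>i=1..n. v i * a i) in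
           (\<Sum>j=1..n. (v j * a j * q j / S) * purchase_prob n v q (\<lambda>i. a i + unit_vec j i))
           + (1 - (\<Sum>j=1..n. v j * a j * q j / S)) * purchase_prob n v q a)
         \<ge> purchase_prob n v q a"
proof -
  define I where "I = {1..n}"
  define w where "w i = v i * a i" for i
  define S where "S = (\<Sum>i\<in>I. w i)"
  define N where "N = (\<Sum>i\<in>I. w i * q i)"
  define c where "c i = q i * v i / (S + v i)" for i
  have fin: "finite I" by (simp add: I_def)
  have w_pos: "\<And>i. i \<in> I \<Longrightarrow> w i > 0" using v_pos a_pos by (simp add: I_def w_def)
  have "n \<in> I" using assms(1) by (simp add: I_def)
  hence S_pos: "S > 0" unfolding S_def using fin w_pos
    by (metis (no_types, lifting) empty_iff sum_pos)
  have lam: "purchase_prob n v q a = N / S"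
    by (simp add: purchase_prob_def N_def S_def I_def w_def)
  have lamj: "purchase_prob n v q (\<lambda>i. a i + unit_vec j i) = (N + v j * q j) / (S + v j)"
    if "j \<in> I" for j
  proof -
    have e1: "(\<lambda>i. v i * (a i + unit_vec j i) * q i) = (\<lambda>i. w i * q i + (if i = j then v j * q j else 0))"
      by (auto simp: unit_vec_def w_def algebra_simps fun_eq_iff)
    have e2: "(\<lambda>i. v i * (a i + unit_vec j i)) = (\<lambda>i. w i + (if i = j then v j else 0))"
      by (auto simp: unit_vec_def w_def algebra_simps fun_eq_iff)
    have 1: "(\<Sum>i\<in>I. v i * (a i + unit_vec j i) * q i) = N + v j * q j"
      unfolding e1 using that fin by (simp add: sum.distrib N_def)
    have 2: "(\<Sum>i\<in>I. v i * (a i + unit_vec j i)) = S + v j"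
      unfolding e2 using that fin by (simp add: sum.distrib S_def)
    show ?thesis using 1 2 by (simp add: purchase_prob_def I_def)
  qed
  have trm: "(w j * q j / S) * ((N + v j * q j) / (S + v j)) =
        (w j * q j / S) * (N / S) + (w j * c j * (q j - N / S)) / S" if "j \<in> I" for j
  proof -
    have "v j > 0" using that v_pos by (simp add: I_def)
    hence "(N + v j * q j) / (S + v j) = N / S + v j * (q j - N / S) / (S + v j)"
    proof -
      have hp: "S + v j > 0" "S + v j \<noteq> 0" using S_pos \<open>v j > 0\<close> by auto
      have gen: "(x * S + v j * q j) / (S + v j) = x + v j * (q j - x) / (S + v j)" for x
        using hp by (simp add: field_simps)
      have "(N / S) * S = N" using S_pos by simp
      thus ?thesis using gen[of "N / S"] by (simp only:)
    qed
    moreover have "S + v j \<noteq> 0" using S_pos \<open>v j > 0\<close> by auto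
    ultimately show ?thesis using S_pos by (simp add: c_def distrib_left) (simp add: field_simps)
  qed
  have cmono: "(c j - c k) * (q j - q k) \<ge> 0" if "j \<in> I" "k \<in> I" for j k
  proof -
    have key: "c k \<le> c j \<and> q k \<le> q j" if "j \<in> I" "k \<in> I" "j \<le> k" for j k
    proof -
      have qq: "q k \<le> q j" using q_mono that by (simp add: I_def)
      have vv: "v k \<le> v j" using v_mono that by (simp add: I_def)
      have vk: "v k > 0" using v_pos that by (simp add: I_def)
      have qk: "q k \<ge> 0" using q_nonneg that by (simp add: I_def)
      have "v k / (S + v k) \<le> v j / (S + v j)"
        using vv vk S_pos by (simp add: field_simps)
      hence "q k * (v k / (S + v k)) \<le> q j * (v j / (S + v j))"
        using qq qk vk S_pos by (intro mult_mono) auto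
      thus ?thesis using qq by (simp add: c_def)
    qed
    show ?thesis
    proof (cases "j \<le> k")
      case True with key[OF that True] show ?thesis by (simp add: mult_nonneg_nonneg)
    next
      case False
      with key[OF that(2) that(1)] show ?thesis by (simp add: mult_nonpos_nonpos)
    qed
  qed
  have ch: "(\<Sum>i\<in>I. w i * c i) * N \<le> S * (\<Sum>i\<in>I. w i * c i * q i)"
    using cheb[OF fin, of w c q] w_pos cmono unfolding N_def S_def by force
  have pos: "0 \<le> (\<Sum>j\<in>I. w j * c j * (q j - N / S))"
  proof -
    have "(\<Sum>j\<in>I. w j * c j * (q j - N / S)) = (\<Sum>i\<in>I. w i * c i * q i) - (\<Sum>i\<in>I. w i * c i) * N / S"
      by (simp add: algebra_simps sum_subtractf sum_divide_distrib sum_distrib_left)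
    also have "\<dots> \<ge> 0" using ch S_pos by (simp add: field_simps)
    finally show ?thesis .
  qed
  have sumq: "(\<Sum>j\<in>I. v j * a j * q j / S) = N / S"
    by (simp add: N_def w_def sum_divide_distrib)
  have "(\<Sum>j\<in>I. (v j * a j * q j / S) * purchase_prob n v q (\<lambda>i. a i + unit_vec j i))
      = (\<Sum>j\<in>I. (w j * q j / S) * (N / S) + (w j * c j * (q j - N / S)) / S)"
    using lamj trm by (intro sum.cong) (simp_all add: w_def)
  also have "\<dots> = (N / S) * (N / S) + (\<Sum>j\<in>I. w j * c j * (q j - N / S)) / S"
    by (simp add: sum.distrib sum_divide_distrib[symmetric] sum_distrib_right[symmetric] N_def)
  finally have E: "(\<Sum>j\<in>I. (v j * a j * q j / S) * purchase_prob n v q (\<lambda>i. a i + unit_vec j i))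
      = (N / S) * (N / S) + (\<Sum>j\<in>I. w j * c j * (q j - N / S)) / S" .
  have Sdef: "(\<Sum>i=1..n. v i * a i) = S" by (simp add: S_def I_def w_def)
  show ?thesis unfolding Let_def Sdef lam
    using E sumq pos S_pos unfolding I_def by (simp add: algebra_simps)
qed

end
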